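(* Let $x_1,\dots,x_n$ be i.i.d. from a distribution $\mathcal{D}$ on $\{x\in\mathbb{R}^d:\|x\|_2\le1\}$, let $\theta_a^\star\in\mathbb{R}^d$ with $\|\theta_a^\star\|_2\le1$ for $a\in\mathcal{M}=\{1,\dots,N\}$, let $\hat\theta_a\in\mathbb{R}^d$ be arbitrary, and let $\varepsilon:=\max_a\|\hat\theta_a-\theta_a^\star\|_2$. Define $\mu(a;S;x):=\langle\theta_a^\star,x\rangle-\alpha\lambda_a\mathbf{1}\{a\notin S\}$, $\hat\mu(a;S;x):=\langle\hat\theta_a,x\rangle-\alpha\lambda_a\mathbf{1}\{a\notin S\}$, $F(S):=\mathbb{E}_{x\sim\mathcal{D}}[\max_a\mu(a;S;x)]$, $\hat F_n(S):=\frac1n\sum_{t=1}^n\max_a\hat\mu(a;S;x_t)$, and for $\delta'\in(0,1)$ and $1\le K\le N$, $$\rho_n:=\varepsilon+\bar B\sqrt{\frac{2\bigl(K\log(eN/K)+\log(2/\delta')\bigr)}{n}},\qquad \bar B:=2+\alpha\lambda_{\max}.$$ Then with probability at least $1-\delta'$, $\sup_{|S|\le K}|\hat F_n(S)-F(S)|\le\rho_n$. Consequently, if $\hat C\in\arg\max_{|S|\le K}\hat F_n(S)$, then for any fixed $C_0\subseteq\mathcal{M}$ with $|C_0|=K$, $F(C_0)-F(\hat C)\le2\rho_n$.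
   Context: Here $\alpha>0$ and $\lambda_a\in(0,\lambda_{\max}]$ are fixed constants, and $S$ ranges over subsets of $\mathcal{M}$. *)

theory Defs
  imports "HOL-Probability.Probability"
begin

definition mu_val :: "(nat \<Rightarrow> 'a::euclidean_space) \<Rightarrow> real \<Rightarrow> (nat \<Rightarrow> real)
    \<Rightarrow> nat \<Rightarrow> nat set \<Rightarrow> 'a \<Rightarrow> real" where
  "mu_val \<theta> \<alpha> lam a S x = inner (\<theta> a) x - \<alpha> * lam a * (if a \<notin> S then 1 else 0)"

definition F_pop :: "'a::euclidean_space measure \<Rightarrow> nat \<Rightarrow> (nat \<Rightarrow> 'a) \<Rightarrow> real
    \<Rightarrow> (nat \<Rightarrow> real) \<Rightarrow> nat set \<Rightarrow> real" where
  "F_pop D N \<theta> \<alpha> lam S = (\<integral>x. Max ((\<lambda>a. mu_val \<theta> \<alpha> lam a S x) ` {1..N}) \<partial>D)"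

definition F_emp :: "nat \<Rightarrow> (nat \<Rightarrow> 'a::euclidean_space) \<Rightarrow> nat \<Rightarrow> (nat \<Rightarrow> 'a) \<Rightarrow> real
    \<Rightarrow> (nat \<Rightarrow> real) \<Rightarrow> nat set \<Rightarrow> real" where
  "F_emp n xs N \<theta> \<alpha> lam S =
     (1 / real n) * (\<Sum>t = 1..n. Max ((\<lambda>a. mu_val \<theta> \<alpha> lam a S (xs t)) ` {1..N}))"

end

theory Submission
  imports Defs
begin

lemma card_small_subsets:
  fixes N K :: nat
  assumes "1 \<le> K" "K \<le> N"
  shows "real (card {S. S \<subseteq> {1..N} \<and> card S \<le> K}) \<le> (exp 1 * real N / real K) ^ K"
proof -
  have eq: "{S. S \<subseteq> {1..N} \<and> card S \<le> K} = (\<Union>k\<in>{..K}. {S. S \<subseteq> {1..N} \<and> card S = k})"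
    by auto
  have "card {S. S \<subseteq> {1..N} \<and> card S \<le> K} = (\<Sum>k\<in>{..K}. card {S. S \<subseteq> {1..N} \<and> card S = k})"
    unfolding eq
    by (rule card_UN_disjoint) (auto intro: finite_subset[of _ "Pow {1..N}"])
  also have "\<dots> = (\<Sum>k\<in>{..K}. N choose k)"
    by (simp add: n_subsets)
  finally have c: "real (card {S. S \<subseteq> {1..N} \<and> card S \<le> K}) = (\<Sum>k\<in>{..K}. real (N choose k))"
    by simp
  define x where "x = real K / real N"
  have x0: "0 < x" and x1: "x \<le> 1" using assms by (auto simp: x_def)
  have "x ^ K * (\<Sum>k\<in>{..K}. real (N choose k)) = (\<Sum>k\<in>{..K}. real (N choose k) * x ^ K)"
    by (simp add: sum_distrib_left mult.commute)
  also have "\<dots> \<le> (\<Sum>k\<in>{..K}. real (N choose k) * x ^ k)"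
    by (intro sum_mono mult_left_mono power_decreasing) (use x0 x1 in auto)
  also have "\<dots> \<le> (\<Sum>k\<in>{..N}. real (N choose k) * x ^ k)"
    by (intro sum_mono2) (use assms x0 in auto)
  also have "\<dots> = (x + 1) ^ N"
    by (simp add: binomial_ring)
  also have "\<dots> \<le> exp x ^ N"
    by (intro power_mono) (use x0 exp_ge_add_one_self[of x] in \<open>auto simp: add.commute\<close>)
  also have "\<dots> = exp (real K)"
    using assms by (simp add: x_def flip: exp_of_nat_mult)
  finally have h: "x ^ K * (\<Sum>k\<in>{..K}. real (N choose k)) \<le> exp (real K)" .
  have "(\<Sum>k\<in>{..K}. real (N choose k)) \<le> exp (real K) / x ^ K"
    using h x0 by (simp add: field_simps)
  also have "\<dots> = (exp 1 * real N / real K) ^ K"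
    using assms by (simp add: x_def power_divide power_mult_distrib flip: exp_of_nat_mult)
  finally show ?thesis using c by simp
qed

lemma indep_proj:
  assumes D: "prob_space D" and I: "finite I" "I \<noteq> {}"
  shows "prob_space.indep_vars (PiM I (\<lambda>_. D)) (\<lambda>_. D) (\<lambda>i x. x i) I"
proof -
  interpret P: prob_space "PiM I (\<lambda>_. D)" by (rule prob_space_PiM) (use D in auto)
  have "distr (PiM I (\<lambda>_. D)) (PiM I (\<lambda>_. D)) (\<lambda>x. \<lambda>i\<in>I. x i) = distr (PiM I (\<lambda>_. D)) (PiM I (\<lambda>_. D)) (\<lambda>x. x)"
    by (rule distr_cong) (auto simp: space_PiM PiE_def extensional_restrict)
  also have "\<dots> = PiM I (\<lambda>_. D)" by simp
  also have "\<dots> = PiM I (\<lambda>i. distr (PiM I (\<lambda>_. D)) D (\<lambda>x. x i))"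
    by (intro PiM_cong refl, subst distr_PiM_component) (use D in auto)
  finally show ?thesis
    by (subst P.indep_vars_iff_distr_eq_PiM') (use I in auto)
qed

lemma Max_diff_le:
  fixes f h :: "nat \<Rightarrow> real"
  assumes "finite A" "A \<noteq> {}" "\<And>a. a \<in> A \<Longrightarrow> \<bar>f a - h a\<bar> \<le> e"
  shows "\<bar>Max (f ` A) - Max (h ` A)\<bar> \<le> e"
proof -
  have "Max (f ` A) \<in> f ` A" "Max (h ` A) \<in> h ` A" using assms by (auto intro!: Max_in)
  then obtain a b where a: "a \<in> A" "Max (f ` A) = f a" and b: "b \<in> A" "Max (h ` A) = h b"
    by auto
  have "h a \<le> Max (h ` A)" "f b \<le> Max (f ` A)" using a(1) b(1) assms(1) by (auto intro!: Max_ge)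
  then show ?thesis using assms(3)[OF a(1)] assms(3)[OF b(1)] a b by auto
qed

lemma hoeff_app:
  fixes D :: "'a::euclidean_space measure" and g :: "'a \<Rightarrow> real"
  assumes D: "prob_space D" and Ds: "sets D = sets borel"
    and g: "g \<in> borel_measurable borel" and gab: "AE x in D. g x \<in> {a..b}" and ab: "a < b"
    and n: "n \<ge> 1" and t0: "t0 \<ge> 0"
  shows "measure (PiM {1..n} (\<lambda>_. D)) {xs \<in> space (PiM {1..n} (\<lambda>_. D)).
            \<bar>(\<Sum>t\<in>{1..n}. g (xs t)) / real n - (\<integral>x. g x \<partial>D)\<bar> \<ge> t0}
         \<le> 2 * exp (- 2 * real n * t0\<^sup>2 / (b - a)\<^sup>2)"
proof -
  let ?P = "PiM {1..n} (\<lambda>_. D)"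
  interpret P: prob_space ?P by (rule prob_space_PiM) (use D in auto)
  have gD: "g \<in> borel_measurable D" unfolding measurable_cong_sets[OF Ds refl] by (rule g)
  have proj: "(\<lambda>xs. xs t) \<in> measurable ?P D" if "t \<in> {1..n}" for t
    using that by (rule measurable_component_singleton)
  have dproj: "distr ?P D (\<lambda>xs. xs t) = D" if "t \<in> {1..n}" for t
    using that D by (intro distr_PiM_component) auto
  have one: "1 \<in> {1..n}" using n by auto
  have ind: "P.indep_vars (\<lambda>_. borel) (\<lambda>t xs. g (xs t)) {1..n}"
    by (rule P.indep_vars_compose2[OF indep_proj[OF D]]) (use n gD in auto)
  have dX: "distr ?P borel (\<lambda>xs. g (xs t)) = distr D borel g" if "t \<in> {1..n}" for t
  proof -
    have "distr (distr ?P D (\<lambda>xs. xs t)) borel g = distr ?P borel (g \<circ> (\<lambda>xs. xs t))"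
      by (rule distr_distr[OF gD proj[OF that]])
    then have "distr ?P borel (\<lambda>xs. g (xs t)) = distr (distr ?P D (\<lambda>xs. xs t)) borel g"
      by (simp add: comp_def)
    then show ?thesis by (simp only: dproj[OF that])
  qed
  have rvY: "(\<lambda>xs. g (xs 1)) \<in> borel_measurable ?P"
    using measurable_comp[OF proj[OF one] gD] by (simp add: comp_def)
  have "AE x in distr ?P D (\<lambda>xs. xs 1). g x \<in> {a..b}" using gab by (simp only: dproj[OF one])
  then have AEY: "AE xs in ?P. g (xs 1) \<in> {a..b}"
    using proj[OF one] gD by (subst (asm) AE_distr_iff) auto
  interpret H0: iid_interval_bounded_random_variables ?P "{1..n}" "\<lambda>t xs. g (xs t)" "\<lambda>xs. g (xs 1)" a b
  proof (unfold_locales)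
    show "finite {1..n}" by simp
    show "P.indep_vars (\<lambda>_. borel) (\<lambda>t xs. g (xs t)) {1..n}" by (rule ind)
    show "distr ?P borel (\<lambda>xs. g (xs i)) = distr ?P borel (\<lambda>xs. g (xs 1))" if "i \<in> {1..n}" for i
      using dX[OF that] dX[OF one] by (simp only:)
    show "(\<lambda>xs. g (xs 1)) \<in> borel_measurable ?P" by (rule rvY)
    show "AE xs in ?P. g (xs 1) \<in> {a..b}" by (rule AEY)
  qed
  interpret H: Hoeffding_ineq_iid ?P "{1..n}" "\<lambda>t xs. g (xs t)" "\<lambda>xs. g (xs 1)" a b "P.expectation (\<lambda>xs. g (xs 1))"
    by intro_locales
  have E: "P.expectation (\<lambda>xs. g (xs 1)) = (\<integral>x. g x \<partial>D)"
  proof -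
    have "(\<integral>x. g x \<partial>D) = (\<integral>x. g x \<partial>(distr ?P D (\<lambda>xs. xs 1)))" by (simp only: dproj[OF one])
    also have "\<dots> = P.expectation (\<lambda>xs. g (xs 1))"
      by (rule integral_distr[OF proj[OF one] gD])
    finally show ?thesis by simp
  qed
  show ?thesis
    using H.Hoeffding_ineq_abs_ge'[OF t0 ab] n E by simp
qed


lemma sum_proj_meas:
  fixes D :: "'a::euclidean_space measure"
  assumes Ds: "sets D = sets borel" and h: "h \<in> borel_measurable borel"
  shows "(\<lambda>xs. \<Sum>t\<in>{1..n}. (h (xs t) :: real)) \<in> borel_measurable (PiM {1..n} (\<lambda>_. D))"
proof -
  have hD: "h \<in> borel_measurable D" unfolding measurable_cong_sets[OF Ds refl] by (rule h)
  show ?thesis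
  proof (rule borel_measurable_sum)
    fix t assume "t \<in> {1..n}"
    then have "(\<lambda>xs. xs t) \<in> measurable (PiM {1..n} (\<lambda>_. D)) D"
      by (rule measurable_component_singleton)
    from measurable_comp[OF this hD] show "(\<lambda>xs. h (xs t)) \<in> borel_measurable (PiM {1..n} (\<lambda>_. D))"
      by (simp add: comp_def)
  qed
qed

lemma maxmu_meas:
  "(\<lambda>x. Max ((\<lambda>a. mu_val \<theta> \<alpha> lam a S x) ` {1..N})) \<in> borel_measurable borel"
proof (rule borel_measurable_Max)
  fix a
  show "(\<lambda>x. mu_val \<theta> \<alpha> lam a S x) \<in> borel_measurable borel"
    unfolding mu_val_def by (intro borel_measurable_continuous_onI continuous_intros)
qed simp

lemma maxmu_bounds:
  fixes x :: "'a::euclidean_space"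
  assumes N: "N \<ge> 1" and th: "\<forall>a\<in>{1..N}. norm (\<theta> a) \<le> 1"
    and lam: "\<forall>a\<in>{1..N}. 0 < lam a \<and> lam a \<le> lam_max" and al: "\<alpha> > 0" and x: "norm x \<le> 1"
  shows "Max ((\<lambda>a. mu_val \<theta> \<alpha> lam a S x) ` {1..N}) \<in> {-1 - \<alpha> * lam_max .. 1}"
proof -
  have fin: "finite ((\<lambda>a. mu_val \<theta> \<alpha> lam a S x) ` {1..N})" by simp
  have ne: "(\<lambda>a. mu_val \<theta> \<alpha> lam a S x) ` {1..N} \<noteq> {}" using N by auto
  have up: "mu_val \<theta> \<alpha> lam a S x \<le> 1" if a: "a \<in> {1..N}" for a
  proof -
    have "inner (\<theta> a) x \<le> norm (\<theta> a) * norm x" by (rule norm_cauchy_schwarz)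
    also have "\<dots> \<le> 1 * 1" using th a x by (intro mult_mono) auto
    finally have "inner (\<theta> a) x \<le> 1" by simp
    moreover have "lam a > 0" using lam a by auto
    then have "0 \<le> \<alpha> * lam a * (if a \<notin> S then 1 else 0)" using al by simp
    ultimately show ?thesis unfolding mu_val_def by linarith
  qed
  have one: "1 \<in> {1..N}" using N by auto
  have lo: "-1 - \<alpha> * lam_max \<le> mu_val \<theta> \<alpha> lam 1 S x"
  proof -
    have "\<bar>inner (\<theta> 1) x\<bar> \<le> norm (\<theta> 1) * norm x" by (rule Cauchy_Schwarz_ineq2)
    also have "\<dots> \<le> 1 * 1" using th one x by (intro mult_mono) auto
    finally have "-1 \<le> inner (\<theta> 1) x" by simp
    moreover have "\<alpha> * lam 1 * (if 1 \<notin> S then 1 else 0) \<le> \<alpha> * lam_max"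
      using al lam one by (auto intro: mult_left_mono less_imp_le)
    ultimately show ?thesis unfolding mu_val_def by linarith
  qed
  have "mu_val \<theta> \<alpha> lam 1 S x \<le> Max ((\<lambda>a. mu_val \<theta> \<alpha> lam a S x) ` {1..N})"
    using fin one by (intro Max_ge) auto
  moreover have "Max ((\<lambda>a. mu_val \<theta> \<alpha> lam a S x) ` {1..N}) \<le> 1"
    using fin ne up by (subst Max_le_iff) auto
  ultimately show ?thesis using lo by auto
qed

lemma maxmu_diff:
  fixes x :: "'a::euclidean_space"
  assumes N: "N \<ge> 1" and x: "norm x \<le> 1" and e: "\<forall>a\<in>{1..N}. norm (\<theta>1 a - \<theta>2 a) \<le> e"
  shows "\<bar>Max ((\<lambda>a. mu_val \<theta>1 \<alpha> lam a S x) ` {1..N}) - Max ((\<lambda>a. mu_val \<theta>2 \<alpha> lam a S x) ` {1..N})\<bar> \<le> e"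
proof (rule Max_diff_le)
  show "finite {1..N}" by simp
  show "{1..N} \<noteq> {}" using N by auto
  fix a assume a: "a \<in> {1..N}"
  have "\<bar>mu_val \<theta>1 \<alpha> lam a S x - mu_val \<theta>2 \<alpha> lam a S x\<bar> = \<bar>inner (\<theta>1 a - \<theta>2 a) x\<bar>"
    by (simp add: mu_val_def inner_diff_left)
  also have "\<dots> \<le> norm (\<theta>1 a - \<theta>2 a) * norm x" by (rule Cauchy_Schwarz_ineq2)
  also have "\<dots> \<le> norm (\<theta>1 a - \<theta>2 a)" using x by (simp add: mult_left_le)
  also have "\<dots> \<le> e" using e a by auto
  finally show "\<bar>mu_val \<theta>1 \<alpha> lam a S x - mu_val \<theta>2 \<alpha> lam a S x\<bar> \<le> e" by simp
qed

lemma avg_diff: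
  fixes u v :: "nat \<Rightarrow> real"
  assumes n: "n \<ge> 1" and uv: "\<And>t. t \<in> {1..n} \<Longrightarrow> \<bar>u t - v t\<bar> \<le> e"
  shows "\<bar>(\<Sum>t\<in>{1..n}. u t) / real n - (\<Sum>t\<in>{1..n}. v t) / real n\<bar> \<le> e"
proof -
  have "\<bar>(\<Sum>t\<in>{1..n}. u t) - (\<Sum>t\<in>{1..n}. v t)\<bar> = \<bar>\<Sum>t\<in>{1..n}. u t - v t\<bar>"
    by (simp add: sum_subtractf)
  also have "\<dots> \<le> (\<Sum>t\<in>{1..n}. \<bar>u t - v t\<bar>)" by (rule sum_abs)
  also have "\<dots> \<le> (\<Sum>t\<in>{1..n}. e)" using uv by (intro sum_mono) auto
  also have "\<dots> = real n * e" by simp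
  finally have h: "\<bar>(\<Sum>t\<in>{1..n}. u t) - (\<Sum>t\<in>{1..n}. v t)\<bar> \<le> real n * e" .
  have "(\<Sum>t\<in>{1..n}. u t) / real n - (\<Sum>t\<in>{1..n}. v t) / real n
        = ((\<Sum>t\<in>{1..n}. u t) - (\<Sum>t\<in>{1..n}. v t)) / real n" by (simp add: diff_divide_distrib)
  moreover have "\<bar>((\<Sum>t\<in>{1..n}. u t) - (\<Sum>t\<in>{1..n}. v t)) / real n\<bar>
      = \<bar>(\<Sum>t\<in>{1..n}. u t) - (\<Sum>t\<in>{1..n}. v t)\<bar> / real n" by (simp add: abs_divide)
  moreover have "\<bar>(\<Sum>t\<in>{1..n}. u t) - (\<Sum>t\<in>{1..n}. v t)\<bar> / real n \<le> e"
    using h n by (subst pos_divide_le_eq) (auto simp: mult.commute)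
  ultimately show ?thesis by simp
qed

theorem lemmaD5:
  fixes D :: "'a::euclidean_space measure"
    and n N K :: nat
    and \<theta>star \<theta>hat :: "nat \<Rightarrow> 'a"
    and \<alpha> lam_max \<delta>' :: real
    and lam :: "nat \<Rightarrow> real"
  assumes D_prob: "prob_space D"
    and D_sets: "sets D = sets borel"
    and D_ball: "AE x in D. norm x \<le> 1"
    and n_pos: "n \<ge> 1"
    and K_ge: "1 \<le> K" and K_le: "K \<le> N"
    and \<theta>star_norm: "\<forall>a\<in>{1..N}. norm (\<theta>star a) \<le> 1"
    and \<alpha>_pos: "\<alpha> > 0"
    and lam_range: "\<forall>a\<in>{1..N}. 0 < lam a \<and> lam a \<le> lam_max"
    and \<delta>_range: "0 < \<delta>'" "\<delta>' < 1"
  shows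
    "let \<epsilon> = Max ((\<lambda>a. norm (\<theta>hat a - \<theta>star a)) ` {1..N});
         B = 2 + \<alpha> * lam_max;
         \<rho> = \<epsilon> + B * sqrt (2 * (real K * ln (exp 1 * real N / real K) + ln (2 / \<delta>')) / real n);
         F = F_pop D N \<theta>star \<alpha> lam
     in measure (PiM {1..n} (\<lambda>_. D))
          {xs \<in> space (PiM {1..n} (\<lambda>_. D)).
             (SUP S\<in>{S. S \<subseteq> {1..N} \<and> card S \<le> K}.
                 \<bar>F_emp n xs N \<theta>hat \<alpha> lam S - F S\<bar>) \<le> \<rho>
           \<and> (\<forall>Chat. Chat \<subseteq> {1..N} \<and> card Chat \<le> K \<and>
                (\<forall>S. S \<subseteq> {1..N} \<and> card S \<le> K \<longrightarrow>
                    F_emp n xs N \<theta>hat \<alpha> lam S \<le> F_emp n xs N \<theta>hat \<alpha> lam Chat)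
                \<longrightarrow> (\<forall>C0. C0 \<subseteq> {1..N} \<and> card C0 = K \<longrightarrow> F C0 - F Chat \<le> 2 * \<rho>))}
        \<ge> 1 - \<delta>'"
  proof -
  define \<epsilon> where "\<epsilon> = Max ((\<lambda>a. norm (\<theta>hat a - \<theta>star a)) ` {1..N})"
  define B where "B = 2 + \<alpha> * lam_max"
  define L where "L = real K * ln (exp 1 * real N / real K) + ln (2 / \<delta>')"
  define t0 where "t0 = B * sqrt (2 * L / real n)"
  define \<rho> where "\<rho> = \<epsilon> + t0"
  define F where "F = F_pop D N \<theta>star \<alpha> lam"
  define SS where "SS = {S. S \<subseteq> {1..N} \<and> card S \<le> K}"
  define g where "g S x = Max ((\<lambda>a. mu_val \<theta>star \<alpha> lam a S x) ` {1..N})" for S x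
  define gh where "gh S x = Max ((\<lambda>a. mu_val \<theta>hat \<alpha> lam a S x) ` {1..N})" for S x
  let ?P = "PiM {1..n} (\<lambda>_. D)"
  interpret P: prob_space ?P by (rule prob_space_PiM) (use D_prob in auto)
  define Bad where "Bad S = {xs \<in> space ?P. t0 \<le> \<bar>(\<Sum>t\<in>{1..n}. g S (xs t)) / real n - F S\<bar>}" for S
  define Good where "Good = space ?P - (\<Union>S\<in>SS. Bad S)"
  define T where "T = {xs \<in> space ?P.
             (SUP S\<in>{S. S \<subseteq> {1..N} \<and> card S \<le> K}.
                 \<bar>F_emp n xs N \<theta>hat \<alpha> lam S - F S\<bar>) \<le> \<rho>
           \<and> (\<forall>Chat. Chat \<subseteq> {1..N} \<and> card Chat \<le> K \<and>
                (\<forall>S. S \<subseteq> {1..N} \<and> card S \<le> K \<longrightarrow>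
                    F_emp n xs N \<theta>hat \<alpha> lam S \<le> F_emp n xs N \<theta>hat \<alpha> lam Chat)
                \<longrightarrow> (\<forall>C0. C0 \<subseteq> {1..N} \<and> card C0 = K \<longrightarrow> F C0 - F Chat \<le> 2 * \<rho>))}"
  have N1: "N \<ge> 1" using K_ge K_le by simp
  have finSS: "finite SS" unfolding SS_def by (rule finite_subset[of _ "Pow {1..N}"]) auto
  have emptySS: "{} \<in> SS" unfolding SS_def by simp
  have lam1: "0 < lam_max" using lam_range N1 by force
  have Bpos: "B > 0" unfolding B_def using \<alpha>_pos lam1 by (simp add: add_pos_pos)
  have Ds_space: "space D = UNIV" using D_sets sets_eq_imp_space_eq by fastforce
  have \<epsilon>_ge: "norm (\<theta>hat a - \<theta>star a) \<le> \<epsilon>" if "a \<in> {1..N}" for a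
    unfolding \<epsilon>_def using that by (intro Max_ge) auto
  have g_meas: "g S \<in> borel_measurable borel" for S
    unfolding g_def[abs_def] by (rule maxmu_meas)
  have gh_meas: "gh S \<in> borel_measurable borel" for S
    unfolding gh_def[abs_def] by (rule maxmu_meas)
  have F_int: "F S = (\<integral>x. g S x \<partial>D)" for S
    by (simp add: F_def F_pop_def g_def)
  have Femp_eq: "F_emp n xs N \<theta>hat \<alpha> lam S = (\<Sum>t\<in>{1..n}. gh S (xs t)) / real n" for xs S
    by (simp add: F_emp_def gh_def)
  have ball_sets: "{x \<in> space D. norm x \<le> 1} \<in> sets D"
  proof -
    have "{x \<in> space D. norm x \<le> 1} = cball 0 1" using Ds_space by (auto simp: dist_norm)
    then show ?thesis using D_sets by simp
  qed
  have L0: "L \<ge> 0"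
  proof -
    have "1 \<le> real N / real K" using K_ge K_le by simp
    then have "exp 1 * 1 \<le> exp 1 * (real N / real K)" by (intro mult_left_mono) auto
    then have "exp 1 \<le> exp 1 * real N / real K" by simp
    then have "1 \<le> ln (exp 1 * real N / real K)" using ln_mono[of "exp 1"] by (smt (verit) exp_gt_zero ln_exp)
    moreover have "0 \<le> ln (2 / \<delta>')" using \<delta>_range by simp
    ultimately show ?thesis unfolding L_def by (simp add: add_nonneg_nonneg)
  qed
  have t0_nonneg: "t0 \<ge> 0" unfolding t0_def using Bpos L0 by simp
  have ab: "-1 - \<alpha> * lam_max < 1" using \<alpha>_pos lam1 by (smt (verit) mult_pos_pos)
  have Bab: "1 - (-1 - \<alpha> * lam_max) = B" unfolding B_def by simp
  have Bad_prob: "measure ?P (Bad S) \<le> 2 * exp (- 2 * real n * t0\<^sup>2 / B\<^sup>2)" for S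
  proof -
    have "AE x in D. g S x \<in> {-1 - \<alpha> * lam_max .. 1}"
      using D_ball by eventually_elim (unfold g_def, rule maxmu_bounds[OF N1 \<theta>star_norm lam_range \<alpha>_pos])
    from hoeff_app[OF D_prob D_sets g_meas this ab n_pos t0_nonneg]
    show ?thesis unfolding Bad_def F_int Bab .
  qed
  have Bad_sets: "Bad S \<in> sets ?P" for S
  proof -
    have [measurable]: "(\<lambda>xs. \<Sum>t\<in>{1..n}. g S (xs t)) \<in> borel_measurable ?P"
      by (rule sum_proj_meas[OF D_sets g_meas])
    show ?thesis unfolding Bad_def by measurable
  qed
  have card_bound: "real (card SS) \<le> (exp 1 * real N / real K) ^ K"
    unfolding SS_def by (rule card_small_subsets[OF K_ge K_le])
  have arith: "real (card SS) * (2 * exp (- 2 * real n * t0\<^sup>2 / B\<^sup>2)) \<le> \<delta>'"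
  proof -
    define c where "c = exp 1 * real N / real K"
    define A where "A = real K * ln c"
    define l where "l = ln (2 / \<delta>')"
    have cpos: "c > 0" unfolding c_def using K_ge K_le by simp
    have A0: "A \<ge> 0"
    proof -
      have "1 \<le> real N / real K" using K_ge K_le by simp
      then have "1 \<le> c" unfolding c_def using one_le_exp_iff[of 1]
        by (smt (verit) exp_ge_add_one_self mult_le_cancel_left1 times_divide_eq_right)
      then show ?thesis unfolding A_def by simp
    qed
    have l0: "l \<ge> 0" unfolding l_def using \<delta>_range by simp
    have t0sq: "t0\<^sup>2 = B\<^sup>2 * (2 * L / real n)"
      unfolding t0_def using L0 n_pos by (simp add: power_mult_distrib)
    have expo: "- 2 * real n * t0\<^sup>2 / B\<^sup>2 = - 4 * (A + l)"
      unfolding t0sq using Bpos n_pos by (simp add: L_def A_def l_def c_def field_simps)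
    have cK: "c ^ K = exp A" unfolding A_def using cpos
      by (simp add: exp_of_nat_mult)
    have el: "exp (- l) = \<delta>' / 2" unfolding l_def using \<delta>_range by (simp add: exp_minus)
    have "real (card SS) * (2 * exp (- 2 * real n * t0\<^sup>2 / B\<^sup>2)) \<le> exp A * (2 * exp (- 4 * (A + l)))"
      unfolding expo using card_bound cK c_def by (intro mult_right_mono) auto
    also have "\<dots> = 2 * exp (-3 * A - 3 * l) * exp (- l)"
      by (simp add: exp_add[symmetric] algebra_simps)
    also have "\<dots> \<le> 2 * 1 * exp (- l)"
      using A0 l0 by (intro mult_right_mono mult_left_mono) auto
    also have "\<dots> = \<delta>'" using el by simp
    finally show ?thesis .
  qed
  have union_prob: "measure ?P (\<Union>S\<in>SS. Bad S) \<le> \<delta>'"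
  proof -
    have "measure ?P (\<Union>S\<in>SS. Bad S) \<le> (\<Sum>S\<in>SS. measure ?P (Bad S))"
      using finSS Bad_sets by (intro P.finite_measure_subadditive_finite) auto
    also have "\<dots> \<le> (\<Sum>S\<in>SS. 2 * exp (- 2 * real n * t0\<^sup>2 / B\<^sup>2))"
      by (intro sum_mono Bad_prob)
    also have "\<dots> = real (card SS) * (2 * exp (- 2 * real n * t0\<^sup>2 / B\<^sup>2))" by simp
    also have "\<dots> \<le> \<delta>'" by (rule arith)
    finally show ?thesis .
  qed
  have U_sets: "(\<Union>S\<in>SS. Bad S) \<in> sets ?P" using finSS Bad_sets by auto
  have Good_prob: "measure ?P Good \<ge> 1 - \<delta>'"
    unfolding Good_def using P.finite_measure_compl[OF U_sets] union_prob P.prob_space by simp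
  have AE_norm: "AE xs in ?P. \<forall>t\<in>{1..n}. norm (xs t) \<le> 1"
  proof (rule AE_finite_allI)
    show "finite {1..n}" by simp
    fix t assume t: "t \<in> {1..n}"
    have proj: "(\<lambda>xs. xs t) \<in> measurable ?P D" using t by (rule measurable_component_singleton)
    have dp: "distr ?P D (\<lambda>xs. xs t) = D" using D_prob t by (intro distr_PiM_component) auto
    have "AE x in distr ?P D (\<lambda>xs. xs t). norm x \<le> 1"
      using D_ball by (simp only: dp)
    then show "AE xs in ?P. norm (xs t) \<le> 1"
      using AE_distr_iff[OF proj ball_sets] by simp
  qed
  have T_eq: "T = {xs \<in> space ?P. (\<forall>S\<in>SS. \<bar>F_emp n xs N \<theta>hat \<alpha> lam S - F S\<bar> \<le> \<rho>)
      \<and> (\<forall>Chat\<in>SS. (\<forall>S\<in>SS. F_emp n xs N \<theta>hat \<alpha> lam S \<le> F_emp n xs N \<theta>hat \<alpha> lam Chat)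
           \<longrightarrow> (\<forall>C0. C0 \<subseteq> {1..N} \<and> card C0 = K \<longrightarrow> F C0 - F Chat \<le> 2 * \<rho>))}"
  proof -
    have "(SUP S\<in>SS. \<bar>F_emp n xs N \<theta>hat \<alpha> lam S - F S\<bar>) \<le> \<rho> \<longleftrightarrow> (\<forall>S\<in>SS. \<bar>F_emp n xs N \<theta>hat \<alpha> lam S - F S\<bar> \<le> \<rho>)" for xs
      using finSS emptySS by (intro cSUP_le_iff) auto
    then show ?thesis unfolding T_def SS_def by auto
  qed
  have T_sets: "T \<in> sets ?P"
  proof -
    have Fm[measurable]: "(\<lambda>xs. F_emp n xs N \<theta>hat \<alpha> lam S) \<in> borel_measurable ?P" for S
      unfolding Femp_eq by (intro borel_measurable_divide sum_proj_meas[OF D_sets gh_meas] borel_measurable_const)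
    define Q where "Q Chat = (\<forall>C0. C0 \<subseteq> {1..N} \<and> card C0 = K \<longrightarrow> F C0 - F Chat \<le> 2 * \<rho>)" for Chat
    have s1: "{xs \<in> space ?P. \<bar>F_emp n xs N \<theta>hat \<alpha> lam S - F S\<bar> \<le> \<rho>} \<in> sets ?P" for S
      by measurable
    have s2: "{xs \<in> space ?P. F_emp n xs N \<theta>hat \<alpha> lam S \<le> F_emp n xs N \<theta>hat \<alpha> lam Chat} \<in> sets ?P" for S Chat
      by (rule borel_measurable_le[OF Fm Fm])
    have "T = {xs \<in> space ?P. (\<forall>S\<in>SS. \<bar>F_emp n xs N \<theta>hat \<alpha> lam S - F S\<bar> \<le> \<rho>)
      \<and> (\<forall>Chat\<in>SS. (\<forall>S\<in>SS. F_emp n xs N \<theta>hat \<alpha> lam S \<le> F_emp n xs N \<theta>hat \<alpha> lam Chat) \<longrightarrow> Q Chat)}"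
      unfolding T_eq Q_def ..
    also have "\<dots> \<in> sets ?P"
      by (intro sets.sets_Collect_conj sets.sets_Collect_finite_All sets.sets_Collect_imp
          sets.sets_Collect_const finSS s1 s2)
    finally show ?thesis .
  qed
  have incl: "AE xs in ?P. xs \<in> Good \<longrightarrow> xs \<in> T"
    using AE_norm
  proof eventually_elim
    case (elim xs)
    show ?case
    proof
      assume G: "xs \<in> Good"
      then have sp: "xs \<in> space ?P" unfolding Good_def by simp
      have dev: "\<bar>(\<Sum>t\<in>{1..n}. g S (xs t)) / real n - F S\<bar> < t0" if "S \<in> SS" for S
        using G that sp unfolding Good_def Bad_def by auto
      have close: "\<bar>F_emp n xs N \<theta>hat \<alpha> lam S - (\<Sum>t\<in>{1..n}. g S (xs t)) / real n\<bar> \<le> \<epsilon>" for S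
        unfolding Femp_eq
      proof (rule avg_diff[OF n_pos])
        fix t assume "t \<in> {1..n}"
        then have "norm (xs t) \<le> 1" using elim by auto
        then show "\<bar>gh S (xs t) - g S (xs t)\<bar> \<le> \<epsilon>"
          unfolding gh_def g_def using \<epsilon>_ge by (intro maxmu_diff[OF N1]) auto
      qed
      have dev2: "\<bar>F_emp n xs N \<theta>hat \<alpha> lam S - F S\<bar> \<le> \<rho>" if "S \<in> SS" for S
        using dev[OF that] close[of S] unfolding \<rho>_def by linarith
      have opt: "F C0 - F Chat \<le> 2 * \<rho>"
        if Ch: "Chat \<in> SS" and mx: "\<forall>S\<in>SS. F_emp n xs N \<theta>hat \<alpha> lam S \<le> F_emp n xs N \<theta>hat \<alpha> lam Chat"
          and C0: "C0 \<subseteq> {1..N}" "card C0 = K" for Chat C0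
      proof -
        have C0S: "C0 \<in> SS" unfolding SS_def using C0 by simp
        show ?thesis using dev2[OF C0S] dev2[OF Ch] mx C0S by fastforce
      qed
      show "xs \<in> T" unfolding T_eq using sp dev2 opt by blast
    qed
  qed
  have main: "measure ?P T \<ge> 1 - \<delta>'"
    using Good_prob P.finite_measure_mono_AE[OF incl T_sets] by linarith
  then show ?thesis
    unfolding Let_def T_def \<rho>_def t0_def L_def \<epsilon>_def B_def F_def .
qed

end
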